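(* Let $k$ be a field and $n\in\mathbb{Z}$. Let $(x,y)\in k^2$. Then $f_n(x,y)=0$ and $x^2-y-2=0$ hold simultaneously if and only if $n\neq0$ in $k$, $y=2-\frac1n$ and $x^2=4-\frac1n$; that is, the common zeros are the points $(\pm\sqrt{4-\frac1n},\,2-\frac1n)$ (when such square roots exist in $k$), and there are none if $n=0$ in $k$.
   Context: $\mathcal{S}_n(z)\in\mathbb{Z}[z]$ ($n\in\mathbb{Z}$) are the Chebyshev polynomials of the second kind defined by $\mathcal{S}_0=0$, $\mathcal{S}_1=1$, $\mathcal{S}_{n+1}=z\mathcal{S}_n-\mathcal{S}_{n-1}$ for all $n\in\mathbb{Z}$ (so that $\mathcal{S}_n(2\cos\theta)=\sin n\theta/\sin\theta$). Put $z=z(x,y)=2x^2-x^2y+y^2-2$ and $f_n(x,y)=(y-1)\mathcal{S}_n(z)-\mathcal{S}_{n-1}(z)$. *)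

theory Defs
  imports Main
begin

fun cheb_S_nat :: "nat \<Rightarrow> 'a::comm_ring_1 \<Rightarrow> 'a" where
  "cheb_S_nat 0 z = 0"
| "cheb_S_nat (Suc 0) z = 1"
| "cheb_S_nat (Suc (Suc n)) z = z * cheb_S_nat (Suc n) z - cheb_S_nat n z"

text \<open>Extension to all integer indices; the recurrence forces S (-n) = - S n.\<close>
definition cheb_S :: "int \<Rightarrow> 'a::comm_ring_1 \<Rightarrow> 'a" where
  "cheb_S n z = (if 0 \<le> n then cheb_S_nat (nat n) z else - cheb_S_nat (nat (- n)) z)"

definition zz :: "'a::comm_ring_1 \<Rightarrow> 'a \<Rightarrow> 'a" where
  "zz x y = 2 * x^2 - x^2 * y + y^2 - 2"

definition f :: "int \<Rightarrow> 'a::comm_ring_1 \<Rightarrow> 'a \<Rightarrow> 'a" where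
  "f n x y = (y - 1) * cheb_S n (zz x y) - cheb_S (n - 1) (zz x y)"

end

theory Submission
  imports Defs
begin

lemma S_nat2: "cheb_S_nat n (2::'a::comm_ring_1) = of_nat n"
  by (induction n "2::'a" rule: cheb_S_nat.induct) (simp_all add: algebra_simps)

lemma S2: "cheb_S n (2::'a::comm_ring_1) = of_int n"
  by (simp add: cheb_S_def S_nat2)

lemma zz2: "x^2 - y - 2 = 0 \<Longrightarrow> zz x y = (2::'a::comm_ring_1)"
proof -
  assume "x^2 - y - 2 = 0"
  then have "x^2 = y + 2" by (simp add: algebra_simps)
  then show ?thesis unfolding zz_def by (simp add: algebra_simps power2_eq_square)
qed

theorem proposition9p1:
  fixes n :: int and x y :: "'k::field"
  shows "(f n x y = 0 \<and> x^2 - y - 2 = 0) \<longleftrightarrow>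
         (of_int n \<noteq> (0::'k) \<and> y = 2 - 1 / of_int n \<and> x^2 = 4 - 1 / of_int n)"
proof
  assume h: "f n x y = 0 \<and> x^2 - y - 2 = 0"
  then have z: "zz x y = 2" using zz2 by blast
  have e: "(y - 1) * of_int n - (of_int n - 1) = (0::'k)"
    using h unfolding f_def z S2 by simp
  have nz: "of_int n \<noteq> (0::'k)"
  proof
    assume "of_int n = (0::'k)" then show False using e by simp
  qed
  have y: "y = 2 - 1 / of_int n" using e nz by (simp add: field_simps)
  have "x^2 = y + 2" using h by (simp add: algebra_simps)
  then show "of_int n \<noteq> (0::'k) \<and> y = 2 - 1 / of_int n \<and> x^2 = 4 - 1 / of_int n"
    using nz y by simp
next
  assume h: "of_int n \<noteq> (0::'k) \<and> y = 2 - 1 / of_int n \<and> x^2 = 4 - 1 / of_int n"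
  then have q: "x^2 - y - 2 = 0" by simp
  then have z: "zz x y = 2" using zz2 by blast
  have "f n x y = (y - 1) * of_int n - (of_int n - 1)"
    unfolding f_def z S2 by simp
  also have "\<dots> = 0"
  proof -
    have "y = 2 - 1 / of_int n" "of_int n \<noteq> (0::'k)" using h by auto
    then show ?thesis by (simp add: field_simps)
  qed
  finally show "f n x y = 0 \<and> x^2 - y - 2 = 0" using q by simp
qed

end
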